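(* Let $(X,d,\alpha)$ be a computable metric space. Let $S$ be a compact subset of $(X,d)$ and suppose $A_1,\dots,A_n$ are subsets of $S$ such that $S=A_1\cup\dots\cup A_n$ and such that $A_i$ is computable up to $S$ for each $i\in\{1,\dots,n\}$. Then $S$ is a computable compact set.
   Context: A computable metric space is a triple $(X,d,\alpha)$ where $(X,d)$ is a metric space and $\alpha=(\alpha_i)_{i\in\mathbb N}$ is a sequence with dense range in $(X,d)$ such that $(i,j)\mapsto d(\alpha_i,\alpha_j)$ is a computable function $\mathbb N^2\to\mathbb R$ (a function $g:\mathbb N^k\to\mathbb R$ is computable if there is a computable $G:\mathbb N^{k+1}\to\mathbb Q$ with $|g(x)-G(x,i)|<2^{-i}$ for all $x,i$). Fix a computable $q:\mathbb N\to\mathbb Q$ whose image is the set of positive rationals and computable $\tau_1,\tau_2:\mathbb N\to\mathbb N$ with $\{(\tau_1(i),\tau_2(i)):i\in\mathbb N\}=\mathbb N^2$; let $\lambda_i=\alpha_{\tau_1(i)}$, $\rho_i=q_{\tau_2(i)}$, $I_i=B(\lambda_i,\rho_i)$ (open ball). Fix computable $\sigma:\mathbb N^2\to\mathbb N$, $\eta:\mathbb N\to\mathbb N$ such that $\{(\sigma(j,0),\dots,\sigma(j,\eta(j))):j\in\mathbb N\}$ is the set of all nonempty finite sequences in $\mathbb N$; let $[j]=\{\sigma(j,i):0\le i\le\eta(j)\}$, $J_j=\bigcup_{i\in[j]}I_i$ and $\Lambda_j=\{\alpha_i:i\in[j]\}$. A compact $K$ is a computable compact set if $\{j:K\subseteq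 J_j\}$ and $\{i:K\cap I_i\ne\emptyset\}$ are computably enumerable. For $A,B\subseteq X$ and $\varepsilon>0$ write $A\prec_\varepsilon B$ if for each $a\in A$ there is $b\in B$ with $d(a,b)<\varepsilon$. For $A\subseteq S\subseteq X$, $A$ is computable up to $S$ if there is a computable $f:\mathbb N\to\mathbb N$ with $A\prec_{2^{-k}}\Lambda_{f(k)}$ and $\Lambda_{f(k)}\prec_{2^{-k}}S$ for all $k\in\mathbb N$. *)

theory Defs
  imports "HOL-Analysis.Analysis"
begin

text \<open>A function of arity n is represented as a function on
lists of naturals; only its values on lists of length n matter.\<close>

inductive recfn :: "nat \<Rightarrow> (nat list \<Rightarrow> nat) \<Rightarrow> bool" where
  rf_zero: "recfn n (\<lambda>_. 0)"
| rf_succ: "recfn 1 (\<lambda>xs. Suc (hd xs))"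
| rf_proj: "i < n \<Longrightarrow> recfn n (\<lambda>xs. xs ! i)"
| rf_comp: "recfn m f \<Longrightarrow> length gs = m \<Longrightarrow> (\<forall>g\<in>set gs. recfn n g)
            \<Longrightarrow> recfn n (\<lambda>xs. f (map (\<lambda>g. g xs) gs))"
| rf_prim: "recfn n f \<Longrightarrow> recfn (Suc (Suc n)) g
            \<Longrightarrow> recfn (Suc n) (\<lambda>xs. rec_nat (f (tl xs)) (\<lambda>y r. g (y # r # tl xs)) (hd xs))"
| rf_mu: "recfn (Suc n) f \<Longrightarrow> (\<forall>xs. length xs = n \<longrightarrow> (\<exists>y. f (y # xs) = 0))
            \<Longrightarrow> recfn n (\<lambda>xs. LEAST y. f (y # xs) = 0)"

definition computable1 :: "(nat \<Rightarrow> nat) \<Rightarrow> bool" where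
  "computable1 f \<longleftrightarrow> (\<exists>h. recfn 1 h \<and> (\<forall>x. h [x] = f x))"

definition computable2 :: "(nat \<Rightarrow> nat \<Rightarrow> nat) \<Rightarrow> bool" where
  "computable2 f \<longleftrightarrow> (\<exists>h. recfn 2 h \<and> (\<forall>x y. h [x, y] = f x y))"

definition computable3 :: "(nat \<Rightarrow> nat \<Rightarrow> nat \<Rightarrow> nat) \<Rightarrow> bool" where
  "computable3 f \<longleftrightarrow> (\<exists>h. recfn 3 h \<and> (\<forall>x y z. h [x, y, z] = f x y z))"

definition computable_rat1 :: "(nat \<Rightarrow> rat) \<Rightarrow> bool" where
  "computable_rat1 g \<longleftrightarrow> (\<exists>a b c. computable1 a \<and> computable1 b \<and> computable1 c \<and>
     (\<forall>x. g x = (of_nat (a x) - of_nat (b x)) / of_nat (c x + 1)))"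

definition computable_rat3 :: "(nat \<Rightarrow> nat \<Rightarrow> nat \<Rightarrow> rat) \<Rightarrow> bool" where
  "computable_rat3 g \<longleftrightarrow> (\<exists>a b c. computable3 a \<and> computable3 b \<and> computable3 c \<and>
     (\<forall>x y z. g x y z = (of_nat (a x y z) - of_nat (b x y z)) / of_nat (c x y z + 1)))"

definition computable_real2 :: "(nat \<Rightarrow> nat \<Rightarrow> real) \<Rightarrow> bool" where
  "computable_real2 g \<longleftrightarrow> (\<exists>G. computable_rat3 G \<and>
     (\<forall>x y i. \<bar>g x y - real_of_rat (G x y i)\<bar> < 1 / 2 ^ i))"

definition ce_set :: "nat set \<Rightarrow> bool" where
  "ce_set A \<longleftrightarrow> A = {} \<or> (\<exists>f. computable1 f \<and> A = range f)"

definition computable_metric_space :: "(nat \<Rightarrow> 'a::metric_space) \<Rightarrow> bool" where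
  "computable_metric_space \<alpha> \<longleftrightarrow> closure (range \<alpha>) = UNIV \<and>
     computable_real2 (\<lambda>i j. dist (\<alpha> i) (\<alpha> j))"

definition standard_enums ::
  "(nat \<Rightarrow> rat) \<Rightarrow> (nat \<Rightarrow> nat) \<Rightarrow> (nat \<Rightarrow> nat) \<Rightarrow> (nat \<Rightarrow> nat \<Rightarrow> nat) \<Rightarrow> (nat \<Rightarrow> nat) \<Rightarrow> bool" where
  "standard_enums q \<tau>1 \<tau>2 \<sigma> \<eta> \<longleftrightarrow>
     computable_rat1 q \<and> range q = {r. r > 0} \<and>
     computable1 \<tau>1 \<and> computable1 \<tau>2 \<and> range (\<lambda>i. (\<tau>1 i, \<tau>2 i)) = UNIV \<and>
     computable2 \<sigma> \<and> computable1 \<eta> \<and>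
     range (\<lambda>j. map (\<sigma> j) [0..<Suc (\<eta> j)]) = {xs. xs \<noteq> []}"

definition ratball :: "(nat \<Rightarrow> 'a::metric_space) \<Rightarrow> (nat \<Rightarrow> rat) \<Rightarrow> (nat \<Rightarrow> nat) \<Rightarrow> (nat \<Rightarrow> nat) \<Rightarrow> nat \<Rightarrow> 'a set" where
  "ratball \<alpha> q \<tau>1 \<tau>2 i = ball (\<alpha> (\<tau>1 i)) (real_of_rat (q (\<tau>2 i)))"

definition seqidx :: "(nat \<Rightarrow> nat \<Rightarrow> nat) \<Rightarrow> (nat \<Rightarrow> nat) \<Rightarrow> nat \<Rightarrow> nat set" where
  "seqidx \<sigma> \<eta> j = {\<sigma> j i | i. i \<le> \<eta> j}"

definition ratunion :: "(nat \<Rightarrow> 'a::metric_space) \<Rightarrow> (nat \<Rightarrow> rat) \<Rightarrow> (nat \<Rightarrow> nat) \<Rightarrow> (nat \<Rightarrow> nat)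
     \<Rightarrow> (nat \<Rightarrow> nat \<Rightarrow> nat) \<Rightarrow> (nat \<Rightarrow> nat) \<Rightarrow> nat \<Rightarrow> 'a set" where
  "ratunion \<alpha> q \<tau>1 \<tau>2 \<sigma> \<eta> j = (\<Union>i\<in>seqidx \<sigma> \<eta> j. ratball \<alpha> q \<tau>1 \<tau>2 i)"

definition ptset :: "(nat \<Rightarrow> 'a) \<Rightarrow> (nat \<Rightarrow> nat \<Rightarrow> nat) \<Rightarrow> (nat \<Rightarrow> nat) \<Rightarrow> nat \<Rightarrow> 'a set" where
  "ptset \<alpha> \<sigma> \<eta> j = \<alpha> ` seqidx \<sigma> \<eta> j"

definition approx_prec :: "'a::metric_space set \<Rightarrow> 'a set \<Rightarrow> real \<Rightarrow> bool" where
  "approx_prec A B \<epsilon> \<longleftrightarrow> (\<forall>a\<in>A. \<exists>b\<in>B. dist a b < \<epsilon>)"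

definition computable_compact_set ::
  "(nat \<Rightarrow> 'a::metric_space) \<Rightarrow> (nat \<Rightarrow> rat) \<Rightarrow> (nat \<Rightarrow> nat) \<Rightarrow> (nat \<Rightarrow> nat)
     \<Rightarrow> (nat \<Rightarrow> nat \<Rightarrow> nat) \<Rightarrow> (nat \<Rightarrow> nat) \<Rightarrow> 'a set \<Rightarrow> bool" where
  "computable_compact_set \<alpha> q \<tau>1 \<tau>2 \<sigma> \<eta> K \<longleftrightarrow> compact K \<and>
     ce_set {j. K \<subseteq> ratunion \<alpha> q \<tau>1 \<tau>2 \<sigma> \<eta> j} \<and>
     ce_set {i. K \<inter> ratball \<alpha> q \<tau>1 \<tau>2 i \<noteq> {}}"

definition computable_up_to ::
  "(nat \<Rightarrow> 'a::metric_space) \<Rightarrow> (nat \<Rightarrow> nat \<Rightarrow> nat) \<Rightarrow> (nat \<Rightarrow> nat) \<Rightarrow> 'a set \<Rightarrow> 'a set \<Rightarrow> bool" where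
  "computable_up_to \<alpha> \<sigma> \<eta> A S \<longleftrightarrow> (\<exists>f. computable1 f \<and>
     (\<forall>k. approx_prec A (ptset \<alpha> \<sigma> \<eta> (f k)) (1 / 2 ^ k) \<and>
          approx_prec (ptset \<alpha> \<sigma> \<eta> (f k)) S (1 / 2 ^ k)))"

end

theory Submission
  imports Defs
begin

definition rf :: "nat \<Rightarrow> (nat list \<Rightarrow> nat) \<Rightarrow> bool" where
  "rf n F \<longleftrightarrow> (\<exists>h. recfn n h \<and> (\<forall>xs. length xs = n \<longrightarrow> h xs = F xs))"

lemma rf_cong: "rf n F \<Longrightarrow> (\<And>xs. length xs = n \<Longrightarrow> F xs = G xs) \<Longrightarrow> rf n G"
  unfolding rf_def by metis

lemma rf_zero: "rf n (\<lambda>_. 0)"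
  unfolding rf_def using recfn.rf_zero by blast

lemma rf_proj: "i < n \<Longrightarrow> rf n (\<lambda>xs. xs ! i)"
  unfolding rf_def using recfn.rf_proj by blast

lemma rf_succ1: "rf 1 (\<lambda>xs. Suc (hd xs))"
  unfolding rf_def using recfn.rf_succ by blast

lemma rf_comp:
  assumes "rf m f" "length gs = m" "\<forall>g\<in>set gs. rf n g"
  shows "rf n (\<lambda>xs. f (map (\<lambda>g. g xs) gs))"
proof -
  obtain hf where hf: "recfn m hf" "\<forall>xs. length xs = m \<longrightarrow> hf xs = f xs"
    using assms(1) rf_def by blast
  have "\<forall>g\<in>set gs. \<exists>h. recfn n h \<and> (\<forall>xs. length xs = n \<longrightarrow> h xs = g xs)"
    using assms(3) rf_def by blast
  then obtain H where H: "\<forall>g\<in>set gs. recfn n (H g) \<and> (\<forall>xs. length xs = n \<longrightarrow> H g xs = g xs)"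
    by metis
  have r: "recfn n (\<lambda>xs. hf (map (\<lambda>h. h xs) (map H gs)))"
    using recfn.rf_comp[OF hf(1), of "map H gs" n] assms(2) H by auto
  show ?thesis unfolding rf_def
  proof (intro exI conjI allI impI)
    show "recfn n (\<lambda>xs. hf (map (\<lambda>h. h xs) (map H gs)))" by (rule r)
  next
    fix xs :: "nat list" assume l: "length xs = n"
    have "map (\<lambda>h. h xs) (map H gs) = map (\<lambda>g. g xs) gs" using H l by auto
    moreover have "length (map (\<lambda>g. g xs) gs) = m" using assms(2) by simp
    ultimately show "hf (map (\<lambda>h. h xs) (map H gs)) = f (map (\<lambda>g. g xs) gs)"
      using hf(2) by metis
  qed
qed

lemma rf_prim:
  assumes "rf n f" "rf (Suc (Suc n)) g"
  shows "rf (Suc n) (\<lambda>xs. rec_nat (f (tl xs)) (\<lambda>y r. g (y # r # tl xs)) (hd xs))"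
proof -
  obtain hf where hf: "recfn n hf" "\<forall>xs. length xs = n \<longrightarrow> hf xs = f xs"
    using assms(1) rf_def by blast
  obtain hg where hg: "recfn (Suc (Suc n)) hg" "\<forall>xs. length xs = Suc (Suc n) \<longrightarrow> hg xs = g xs"
    using assms(2) rf_def by blast
  have eq: "rec_nat (hf t) (\<lambda>y r. hg (y # r # t)) m = rec_nat (f t) (\<lambda>y r. g (y # r # t)) m"
    if "length t = n" for t m
    using that hf(2) hg(2) by (induct m) auto
  show ?thesis unfolding rf_def
  proof (intro exI conjI allI impI)
    show "recfn (Suc n) (\<lambda>xs. rec_nat (hf (tl xs)) (\<lambda>y r. hg (y # r # tl xs)) (hd xs))"
      by (rule recfn.rf_prim[OF hf(1) hg(1)])
  next
    fix xs :: "nat list" assume "length xs = Suc n"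
    then show "rec_nat (hf (tl xs)) (\<lambda>y r. hg (y # r # tl xs)) (hd xs) =
       rec_nat (f (tl xs)) (\<lambda>y r. g (y # r # tl xs)) (hd xs)" using eq by simp
  qed
qed

lemma rf_comp1: "rf 1 f \<Longrightarrow> rf n g \<Longrightarrow> rf n (\<lambda>xs. f [g xs])"
  using rf_comp[of 1 f "[g]" n] by simp
lemma rf_comp2: "rf 2 f \<Longrightarrow> rf n g1 \<Longrightarrow> rf n g2 \<Longrightarrow> rf n (\<lambda>xs. f [g1 xs, g2 xs])"
  using rf_comp[of 2 f "[g1,g2]" n] by simp
lemma rf_comp3: "rf 3 f \<Longrightarrow> rf n g1 \<Longrightarrow> rf n g2 \<Longrightarrow> rf n g3 \<Longrightarrow> rf n (\<lambda>xs. f [g1 xs, g2 xs, g3 xs])"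
  using rf_comp[of 3 f "[g1,g2,g3]" n] by (simp add: numeral_3_eq_3)

lemma rf_suc: "rf n f \<Longrightarrow> rf n (\<lambda>xs. Suc (f xs))"
  using rf_comp1[OF rf_succ1] by simp

lemma rf_const: "rf n (\<lambda>_. c)"
  by (induct c) (auto intro: rf_zero dest: rf_suc)

lemma len1: "length xs = Suc 0 \<Longrightarrow> xs = [xs!0]"
  by (cases xs) auto
lemma len2: "length xs = 2 \<Longrightarrow> xs = [xs!0, xs!1]"
  by (cases xs; cases "tl xs") auto
lemma len3: "length xs = 3 \<Longrightarrow> xs = [xs!0, xs!1, xs!2]"
  by (cases xs; cases "tl xs"; cases "tl (tl xs)") (auto simp: numeral_3_eq_3)

lemma add2: "rf 2 (\<lambda>xs. xs!0 + xs!1)"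
proof -
  have h: "rf (Suc 1) (\<lambda>xs. rec_nat ((\<lambda>t. t!0) (tl xs)) (\<lambda>y r. (\<lambda>ys. Suc (ys!1)) (y # r # tl xs)) (hd xs))"
    by (rule rf_prim) (auto intro!: rf_proj rf_suc)
  have rec: "rec_nat b (\<lambda>y r. Suc r) a = a + b" for a b :: nat by (induct a) auto
  show ?thesis unfolding Suc_1[symmetric]
  proof (rule rf_cong[OF h], goal_cases)
    case (1 xs)
    then obtain a b where "xs = [a,b]" using len2 by (metis Suc_1)
    then show ?case using rec by simp
  qed
qed


lemma rf_prim2:
  assumes "rf 1 f" "rf 3 g" "\<And>a b. F [a,b] = rec_nat (f [b]) (\<lambda>y r. g [y,r,b]) a"
  shows "rf 2 F"
proof -
  have h: "rf (Suc 1) (\<lambda>xs. rec_nat (f (tl xs)) (\<lambda>y r. g (y # r # tl xs)) (hd xs))"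
    by (rule rf_prim) (use assms in \<open>auto simp: numeral_3_eq_3\<close>)
  show ?thesis unfolding Suc_1[symmetric]
  proof (rule rf_cong[OF h], goal_cases)
    case (1 xs)
    then obtain a b where "xs = [a,b]" using len2 by (metis Suc_1)
    then show ?case using assms(3) by simp
  qed
qed

lemma rf_prim1:
  assumes "rf 0 f" "rf 2 g" "\<And>a. F [a] = rec_nat (f []) (\<lambda>y r. g [y,r]) a"
  shows "rf 1 F"
proof -
  have h: "rf (Suc 0) (\<lambda>xs. rec_nat (f (tl xs)) (\<lambda>y r. g (y # r # tl xs)) (hd xs))"
    by (rule rf_prim) (use assms in \<open>auto simp: numeral_2_eq_2\<close>)
  show ?thesis unfolding One_nat_def
  proof (rule rf_cong[OF h], goal_cases)
    case (1 xs)
    then obtain a where "xs = [a]" using len1 by metis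
    then show ?case using assms(3) by simp
  qed
qed

lemma rf_add: "rf n f \<Longrightarrow> rf n g \<Longrightarrow> rf n (\<lambda>xs. f xs + g xs)"
  using rf_comp2[OF add2] by simp

lemma mult2: "rf 2 (\<lambda>xs. xs!0 * xs!1)"
proof (rule rf_prim2[where f="\<lambda>_. 0" and g="\<lambda>ys. ys!2 + ys!1"])
  show "rf 3 (\<lambda>ys. ys!2 + ys!1)" by (intro rf_add rf_proj) auto
  show "[a, b] ! 0 * [a, b] ! 1 = rec_nat 0 (\<lambda>y r. [y, r, b] ! 2 + [y, r, b] ! 1) a" for a b :: nat
    by (induct a) (auto simp: numeral_2_eq_2)
qed (rule rf_zero)

lemma rf_mult: "rf n f \<Longrightarrow> rf n g \<Longrightarrow> rf n (\<lambda>xs. f xs * g xs)"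
  using rf_comp2[OF mult2] by simp

lemma pred1: "rf 1 (\<lambda>xs. xs!0 - 1)"
proof (rule rf_prim1[where f="\<lambda>_. 0" and g="\<lambda>ys. ys!0"])
  show "rf 2 (\<lambda>ys. ys!0)" by (rule rf_proj) auto
  show "[a] ! 0 - 1 = rec_nat 0 (\<lambda>y r. [y, r] ! 0) a" for a :: nat
    by (cases a) auto
qed (rule rf_zero)

lemma rf_pred: "rf n f \<Longrightarrow> rf n (\<lambda>xs. f xs - 1)"
  using rf_comp1[OF pred1] by simp

lemma sub2: "rf 2 (\<lambda>xs. xs!1 - xs!0)"
proof (rule rf_prim2[where f="\<lambda>ys. ys!0" and g="\<lambda>ys. ys!1 - 1"])
  show "rf 3 (\<lambda>ys. ys!1 - 1)" by (intro rf_pred rf_proj) auto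
  show "rf 1 (\<lambda>ys. ys!0)" by (rule rf_proj) auto
  show "[a, b] ! 1 - [a, b] ! 0 = rec_nat ([b] ! 0) (\<lambda>y r. [y, r, b] ! 1 - 1) a" for a b :: nat
    by (induct a) auto
qed

lemma rf_sub: "rf n f \<Longrightarrow> rf n g \<Longrightarrow> rf n (\<lambda>xs. f xs - g xs)"
  using rf_comp2[OF sub2, of n g f] by simp

lemma pow1: "rf 1 (\<lambda>xs. 2 ^ (xs!0))"
proof (rule rf_prim1[where f="\<lambda>_. 1" and g="\<lambda>ys. ys!1 + ys!1"])
  show "rf 2 (\<lambda>ys. ys!1 + ys!1)" by (intro rf_add rf_proj) auto
  show "2 ^ ([a] ! 0) = rec_nat 1 (\<lambda>y r. [y, r] ! 1 + [y, r] ! 1) a" for a :: nat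
    by (induct a) auto
qed (rule rf_const)

lemma rf_pow2: "rf n f \<Longrightarrow> rf n (\<lambda>xs. 2 ^ f xs)"
  using rf_comp1[OF pow1] by simp

definition rp :: "nat \<Rightarrow> (nat list \<Rightarrow> bool) \<Rightarrow> bool" where
  "rp n P \<longleftrightarrow> rf n (\<lambda>xs. if P xs then 1 else 0)"

lemma rp_cong: "rp n P \<Longrightarrow> (\<And>xs. length xs = n \<Longrightarrow> P xs = Q xs) \<Longrightarrow> rp n Q"
  unfolding rp_def by (erule rf_cong) simp

lemma rp_less: assumes "rf n f" "rf n g" shows "rp n (\<lambda>xs. f xs < g xs)"
proof -
  have "rf n (\<lambda>xs. 1 - (1 - (g xs - f xs)))" by (intro rf_sub rf_const assms)
  then show ?thesis unfolding rp_def by (rule rf_cong) auto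
qed

lemma rp_not: assumes "rp n P" shows "rp n (\<lambda>xs. \<not> P xs)"
proof -
  have "rf n (\<lambda>xs. 1 - (if P xs then 1 else 0))" using assms unfolding rp_def by (intro rf_sub rf_const)
  then show ?thesis unfolding rp_def by (rule rf_cong) auto
qed

lemma rp_and: assumes "rp n P" "rp n Q" shows "rp n (\<lambda>xs. P xs \<and> Q xs)"
proof -
  have "rf n (\<lambda>xs. (if P xs then 1 else 0) * (if Q xs then 1 else 0))"
    using assms unfolding rp_def by (intro rf_mult)
  then show ?thesis unfolding rp_def by (rule rf_cong) auto
qed

lemma rp_or: assumes "rp n P" "rp n Q" shows "rp n (\<lambda>xs. P xs \<or> Q xs)"
proof -
  have "rp n (\<lambda>xs. \<not> (\<not> P xs \<and> \<not> Q xs))" by (intro rp_not rp_and assms)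
  then show ?thesis by (rule rp_cong) auto
qed

lemma rp_imp: assumes "rp n P" "rp n Q" shows "rp n (\<lambda>xs. P xs \<longrightarrow> Q xs)"
proof -
  have "rp n (\<lambda>xs. \<not> P xs \<or> Q xs)" by (intro rp_not rp_or assms)
  then show ?thesis by (rule rp_cong) auto
qed

lemma rp_le: assumes "rf n f" "rf n g" shows "rp n (\<lambda>xs. f xs \<le> g xs)"
proof -
  have "rp n (\<lambda>xs. \<not> g xs < f xs)" by (intro rp_not rp_less assms)
  then show ?thesis by (rule rp_cong) auto
qed

lemma rp_eq: assumes "rf n f" "rf n g" shows "rp n (\<lambda>xs. f xs = g xs)"
proof -
  have "rp n (\<lambda>xs. f xs \<le> g xs \<and> g xs \<le> f xs)" by (intro rp_and rp_le assms)
  then show ?thesis by (rule rp_cong) auto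
qed

lemma rp_const: "rp n (\<lambda>xs. c)"
  unfolding rp_def by (cases c) (auto intro: rf_const)

lemma rf_if: assumes "rp n P" "rf n f" "rf n g" shows "rf n (\<lambda>xs. if P xs then f xs else g xs)"
proof -
  have "rf n (\<lambda>xs. (if P xs then 1 else 0) * f xs + (1 - (if P xs then 1 else 0)) * g xs)"
    using assms unfolding rp_def by (intro rf_add rf_mult rf_sub rf_const)
  then show ?thesis by (rule rf_cong) auto
qed


lemma map_drop: "length xs = d + n \<Longrightarrow> map (\<lambda>i. xs!(d+i)) [0..<n] = drop d xs"
  by (rule nth_equalityI) auto

lemma rf_cons_drop:
  assumes "rf (Suc n) F" "rf (d+n) h"
  shows "rf (d+n) (\<lambda>xs. F (h xs # drop d xs))"
proof -
  have "rf (d+n) (\<lambda>xs. F (map (\<lambda>g. g xs) (h # map (\<lambda>i xs. xs!(d+i)) [0..<n])))"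
    by (rule rf_comp[OF assms(1)]) (auto intro: rf_proj assms(2))
  then show ?thesis
    by (rule rf_cong) (simp add: comp_def map_drop)
qed

lemma rp_ball0:
  assumes "rp (Suc n) P"
  shows "rp (Suc n) (\<lambda>xs. \<forall>u\<le>hd xs. P (u # tl xs))"
proof -
  define v where "v xs = (if P xs then 1 else 0 :: nat)" for xs
  have v: "rf (Suc n) v" using assms unfolding rp_def v_def by simp
  have f: "rf n (\<lambda>xs. v (0 # xs))"
    using rf_cons_drop[OF v, of 0 "\<lambda>_. 0"] by (simp add: rf_zero)
  have g0: "rf (2+n) (\<lambda>ys. v (Suc (ys!0) # drop 2 ys))"
    by (rule rf_cons_drop[OF v]) (intro rf_suc rf_proj, simp)
  have g: "rf (Suc (Suc n)) (\<lambda>ys. ys!1 * v (Suc (ys!0) # drop 2 ys))"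
    using g0 by (intro rf_mult rf_proj) auto
  have h: "rf (Suc n) (\<lambda>xs. rec_nat (v (0 # tl xs)) (\<lambda>y r. r * v (Suc y # tl xs)) (hd xs))"
    using rf_prim[OF f g] by simp
  have rec: "rec_nat (v (0 # t)) (\<lambda>y r. r * v (Suc y # t)) m = (if \<forall>u\<le>m. P (u # t) then 1 else 0)" for t m
    by (induct m) (auto simp: v_def le_Suc_eq)
  show ?thesis unfolding rp_def
    by (rule rf_cong[OF h]) (simp add: rec)
qed

lemma rp_ball:
  assumes "rp (Suc n) P" "rf n b" "\<And>xs u. length xs = n \<Longrightarrow> Q xs u = P (u # xs)"
  shows "rp n (\<lambda>xs. \<forall>u\<le>b xs. Q xs u)"
proof -
  have "rf (0+n) (\<lambda>xs. (\<lambda>xs. if \<forall>u\<le>hd xs. P (u # tl xs) then 1 else 0) (b xs # drop 0 xs))"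
    by (rule rf_cons_drop) (use rp_ball0[OF assms(1)] assms(2) in \<open>auto simp: rp_def\<close>)
  then have "rf n (\<lambda>xs. if \<forall>u\<le>b xs. P (u # xs) then 1 else 0)" by simp
  then show ?thesis unfolding rp_def
    by (rule rf_cong) (simp add: assms(3))
qed

lemma rp_bex:
  assumes "rp (Suc n) P" "rf n b" "\<And>xs u. length xs = n \<Longrightarrow> Q xs u = P (u # xs)"
  shows "rp n (\<lambda>xs. \<exists>u\<le>b xs. Q xs u)"
proof -
  have "rp n (\<lambda>xs. \<not> (\<forall>u\<le>b xs. \<not> Q xs u))"
    by (intro rp_not rp_ball[OF rp_not[OF assms(1)] assms(2)]) (simp add: assms(3))
  then show ?thesis by (rule rp_cong) auto
qed

lemma rp_ballN:
  assumes "rp m P" "m = Suc n" "rf n b" "\<And>xs u. length xs = n \<Longrightarrow> Q xs u = P (u # xs)"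
  shows "rp n (\<lambda>xs. \<forall>u\<le>b xs. Q xs u)"
  using rp_ball[of n P b Q] assms by simp

lemma rp_bexN:
  assumes "rp m P" "m = Suc n" "rf n b" "\<And>xs u. length xs = n \<Longrightarrow> Q xs u = P (u # xs)"
  shows "rp n (\<lambda>xs. \<exists>u\<le>b xs. Q xs u)"
  using rp_bex[of n P b Q] assms by simp

lemma rf_c1: assumes "computable1 f" "rf n g" shows "rf n (\<lambda>xs. f (g xs))"
proof -
  have "rf 1 (\<lambda>xs. f (xs!0))" using assms(1) unfolding computable1_def rf_def
    by (metis One_nat_def len1)
  from rf_comp1[OF this assms(2)] show ?thesis by simp
qed

lemma rf_c2: assumes "computable2 f" "rf n g1" "rf n g2" shows "rf n (\<lambda>xs. f (g1 xs) (g2 xs))"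
proof -
  have "rf 2 (\<lambda>xs. f (xs!0) (xs!1))" using assms(1) unfolding computable2_def rf_def
    by (metis len2)
  from rf_comp2[OF this assms(2,3)] show ?thesis by simp
qed

lemma rf_c3: assumes "computable3 f" "rf n g1" "rf n g2" "rf n g3"
  shows "rf n (\<lambda>xs. f (g1 xs) (g2 xs) (g3 xs))"
proof -
  have "rf 3 (\<lambda>xs. f (xs!0) (xs!1) (xs!2))" using assms(1) unfolding computable3_def rf_def
    by (metis len3)
  from rf_comp3[OF this assms(2,3,4)] show ?thesis by simp
qed

lemma rf_computable1: "rf 1 F \<Longrightarrow> computable1 (\<lambda>x. F [x])"
  unfolding rf_def computable1_def by auto


lemma rp_comp2: assumes "rp 2 (\<lambda>xs. R (xs!0) (xs!1))" "rf n g1" "rf n g2"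
  shows "rp n (\<lambda>xs. R (g1 xs) (g2 xs))"
  using rf_comp2[OF assms[unfolded rp_def]] unfolding rp_def by simp

lemma ce_from_test:
  assumes "computable1 t1" "computable1 t2" "range (\<lambda>i. (t1 i, t2 i)) = UNIV"
    and "rp 2 (\<lambda>xs. R (xs!0) (xs!1))"
  shows "ce_set {j. \<exists>w. R j w}"
proof (cases "{j. \<exists>w. R j w} = {}")
  case True then show ?thesis unfolding ce_set_def by simp
next
  case False
  then obtain j0 w0 where j0: "R j0 w0" by blast
  have "rf 1 (\<lambda>xs. if R (t1 (xs!0)) (t2 (xs!0)) then t1 (xs!0) else j0)"
  proof -
    have g1: "rf 1 (\<lambda>xs. t1 (xs!0))" by (rule rf_c1[OF assms(1)], rule rf_proj, simp)
    have g2: "rf 1 (\<lambda>xs. t2 (xs!0))" by (rule rf_c1[OF assms(2)], rule rf_proj, simp)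
    have p: "rp 1 (\<lambda>xs. R (t1 (xs!0)) (t2 (xs!0)))" by (rule rp_comp2[OF assms(4) g1 g2])
    show ?thesis by (rule rf_if[OF p g1 rf_const])
  qed
  from rf_computable1[OF this]
  have c: "computable1 (\<lambda>x. if R (t1 x) (t2 x) then t1 x else j0)" by (simp only: nth_Cons_0)
  have rng: "range (\<lambda>x. if R (t1 x) (t2 x) then t1 x else j0) = {j. \<exists>w. R j w}"
  proof (intro equalityI subsetI)
    fix j assume "j \<in> {j. \<exists>w. R j w}"
    then obtain w where "R j w" by blast
    moreover have "(j, w) \<in> range (\<lambda>i. (t1 i, t2 i))" by (simp only: assms(3) UNIV_I)
    then obtain m where "(j, w) = (t1 m, t2 m)" by blast
    then have m: "j = t1 m" "w = t2 m" by simp_all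
    ultimately have "(\<lambda>x. if R (t1 x) (t2 x) then t1 x else j0) m = j" by simp
    then show "j \<in> range (\<lambda>x. if R (t1 x) (t2 x) then t1 x else j0)" by (rule range_eqI[OF sym])
  next
    fix j assume "j \<in> range (\<lambda>x. if R (t1 x) (t2 x) then t1 x else j0)"
    then show "j \<in> {j. \<exists>w. R j w}" using j0 by (auto split: if_splits)
  qed
  show ?thesis unfolding ce_set_def
    by (rule disjI2, rule exI[of _ "\<lambda>x. if R (t1 x) (t2 x) then t1 x else j0"]) (simp only: c rng[symmetric] simp_thms)
qed

lemma select:
  assumes "\<And>i. i \<in> {1..n} \<Longrightarrow> computable1 (fs i)"
  shows "\<exists>F. rf 2 F \<and> (\<forall>i\<in>{1..n}. \<forall>k. F [i,k] = fs i k)"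
  using assms
proof (induct n)
  case 0 then show ?case using rf_zero by auto
next
  case (Suc n)
  then obtain F where F: "rf 2 F" "\<forall>i\<in>{1..n}. \<forall>k. F [i,k] = fs i k" by auto
  have "rf 2 (\<lambda>xs. if xs!0 = Suc n then fs (Suc n) (xs!1) else F xs)"
    by (intro rf_if rp_eq rf_proj rf_const rf_c1[OF Suc.prems] F(1)) auto
  moreover have "\<forall>i\<in>{1..Suc n}. \<forall>k. (\<lambda>xs. if xs!0 = Suc n then fs (Suc n) (xs!1) else F xs) [i,k] = fs i k"
    using F(2) by (auto simp: le_Suc_eq)
  ultimately show ?case by blast
qed

lemma small_pow: assumes "(0::real) < e" shows "\<exists>k. 4 / 2^k < e"
proof -
  obtain k where "(1/2::real)^k < e/4" using real_arch_pow_inv[of "e/4" "1/2"] assms by auto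
  then show ?thesis by (auto simp: power_one_over field_simps)
qed

lemma lebesgue:
  fixes c :: "nat \<Rightarrow> 'a::metric_space"
  assumes "compact S" "S \<subseteq> (\<Union>b\<in>B. ball (c b) (r b))"
  shows "\<exists>K. \<forall>s\<in>S. \<exists>b\<in>B. dist s (c b) + 4/2^K < r b"
proof -
  define V where "V m = (\<Union>b\<in>B. ball (c b) (r b - 4/2^m))" for m :: nat
  have "S \<subseteq> (\<Union>m\<in>UNIV. V m)"
  proof
    fix s assume "s \<in> S"
    then obtain b where b: "b \<in> B" "dist (c b) s < r b" using assms(2) by auto
    then obtain m where "4/2^m < r b - dist (c b) s" using small_pow[of "r b - dist (c b) s"] by auto
    then have "dist (c b) s < r b - 4/2^m" by linarith
    then show "s \<in> (\<Union>m\<in>UNIV. V m)" unfolding V_def using b by auto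
  qed
  then have cover: "S \<subseteq> (\<Union>m\<in>UNIV. V m)" .
  have opn: "open (V m)" if "m \<in> UNIV" for m unfolding V_def by (intro open_UN ballI open_ball)
  obtain C' where C': "C' \<subseteq> UNIV" "finite C'" "S \<subseteq> (\<Union>m\<in>C'. V m)"
    by (rule compactE_image[OF assms(1) opn cover])
  define K where "K = Max (insert 0 C')"
  have "\<exists>b\<in>B. dist s (c b) + 4/2^K < r b" if "s \<in> S" for s
  proof -
    obtain m where m: "m \<in> C'" "s \<in> V m" using C'(3) \<open>s \<in> S\<close> by blast
    obtain b where mb: "b \<in> B" "dist (c b) s < r b - 4/2^m"
      using m(2) unfolding V_def by auto
    have "m \<le> K" unfolding K_def using m(1) C'(2) by simp
    then have "(4::real)/2^K \<le> 4/2^m" by (intro divide_left_mono) (auto intro: power_increasing)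
    then have "dist s (c b) + 4/2^K < r b" using mb(2) by (simp add: dist_commute)
    then show ?thesis using mb(1) by blast
  qed
  then show ?thesis by blast
qed

lemma frac_ineq:
  fixes A B C A' B' C' P :: real
  assumes "C > 0" "C' > 0" "P > 0"
  shows "((A-B)/C + 2/P < (A'-B')/C') \<longleftrightarrow> (A*C'*P + 2*C*C' + B'*C*P < A'*C*P + B*C'*P)"
proof -
  have "((A-B)/C + 2/P < (A'-B')/C') \<longleftrightarrow> ((A-B)/C + 2/P) * (C*C'*P) < ((A'-B')/C') * (C*C'*P)"
    using assms by (intro mult_less_cancel_right_pos[symmetric]) auto
  also have "((A-B)/C + 2/P) * (C*C'*P) = (A-B)*C'*P + 2*C*C'" using assms by (simp add: field_simps)
  also have "((A'-B')/C') * (C*C'*P) = (A'-B')*C*P" using assms by (simp add: field_simps)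
  finally show ?thesis by (simp add: algebra_simps)
qed


theorem proposition4p2:
  fixes \<alpha> :: "nat \<Rightarrow> 'a::metric_space"
    and q :: "nat \<Rightarrow> rat" and \<tau>1 \<tau>2 :: "nat \<Rightarrow> nat"
    and \<sigma> :: "nat \<Rightarrow> nat \<Rightarrow> nat" and \<eta> :: "nat \<Rightarrow> nat"
    and S :: "'a set" and A :: "nat \<Rightarrow> 'a set" and n :: nat
  assumes "computable_metric_space \<alpha>"
    and "standard_enums q \<tau>1 \<tau>2 \<sigma> \<eta>"
    and "compact S"
    and "\<And>i. i \<in> {1..n} \<Longrightarrow> A i \<subseteq> S"
    and "S = (\<Union>i\<in>{1..n}. A i)"
    and "\<And>i. i \<in> {1..n} \<Longrightarrow> computable_up_to \<alpha> \<sigma> \<eta> (A i) S"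
  shows "computable_compact_set \<alpha> q \<tau>1 \<tau>2 \<sigma> \<eta> S"
proof -
  have cr2: "computable_real2 (\<lambda>i j. dist (\<alpha> i) (\<alpha> j))" using assms(1)
    unfolding computable_metric_space_def by (elim conjE) assumption
  from cr2 obtain Gr where Gr: "computable_rat3 Gr"
    and Gapp: "\<And>x y i. \<bar>dist (\<alpha> x) (\<alpha> y) - real_of_rat (Gr x y i)\<bar> < 1 / 2 ^ i"
    unfolding computable_real2_def by blast
  from Gr obtain ga gb gc where ga: "computable3 ga" and gb: "computable3 gb" and gc: "computable3 gc"
    and Geq: "\<And>x y z. Gr x y z = (of_nat (ga x y z) - of_nat (gb x y z)) / of_nat (gc x y z + 1)"
    unfolding computable_rat3_def by blast
  have qc1: "computable_rat1 q" using assms(2) unfolding standard_enums_def by (elim conjE) assumption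
  from qc1 obtain qa qb qc where qa: "computable1 qa" and qb: "computable1 qb" and qc: "computable1 qc"
    and qeq: "\<And>x. q x = (of_nat (qa x) - of_nat (qb x)) / of_nat (qc x + 1)"
    unfolding computable_rat1_def by blast
  note se = assms(2)[unfolded standard_enums_def]
  have t1: "computable1 \<tau>1" using se by (elim conjE) assumption
  have t2: "computable1 \<tau>2" using se by (elim conjE) assumption
  have tsurj: "range (\<lambda>i. (\<tau>1 i, \<tau>2 i)) = UNIV" using se by (elim conjE) assumption
  have sg: "computable2 \<sigma>" using se by (elim conjE) assumption
  have e: "computable1 \<eta>" using se by (elim conjE) assumption
  have "\<forall>i\<in>{1..n}. \<exists>f. computable1 f \<and> (\<forall>k. approx_prec (A i) (ptset \<alpha> \<sigma> \<eta> (f k)) (1 / 2 ^ k) \<and>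
          approx_prec (ptset \<alpha> \<sigma> \<eta> (f k)) S (1 / 2 ^ k))"
    using assms(6) unfolding computable_up_to_def by blast
  then obtain fs where fsall: "\<forall>i\<in>{1..n}. computable1 (fs i) \<and> (\<forall>k. approx_prec (A i) (ptset \<alpha> \<sigma> \<eta> (fs i k)) (1 / 2 ^ k) \<and>
          approx_prec (ptset \<alpha> \<sigma> \<eta> (fs i k)) S (1 / 2 ^ k))"
    using bchoice[OF \<open>\<forall>i\<in>{1..n}. \<exists>f. _\<close>] by blast
  have fs: "\<And>i. i\<in>{1..n} \<Longrightarrow> computable1 (fs i)"
    and fsA: "\<And>i k. i\<in>{1..n} \<Longrightarrow> approx_prec (A i) (ptset \<alpha> \<sigma> \<eta> (fs i k)) (1 / 2 ^ k)"
    and fsS: "\<And>i k. i\<in>{1..n} \<Longrightarrow> approx_prec (ptset \<alpha> \<sigma> \<eta> (fs i k)) S (1 / 2 ^ k)"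
    using fsall by auto
  obtain Fl where Fl: "rf 2 Fl" and Fleq: "\<And>i k. i\<in>{1..n} \<Longrightarrow> Fl [i,k] = fs i k"
    using select[of n fs, OF fs] by blast

  define cmp where "cmp x y k z \<longleftrightarrow> real_of_rat (Gr x y k) + 2/2^k < real_of_rat (q z)" for x y k z
  have cmp_nat: "cmp x y k z \<longleftrightarrow> ga x y k * (qc z + 1) * 2^k + 2*(gc x y k + 1)*(qc z+1) + qb z * (gc x y k + 1) * 2^k
      < qa z * (gc x y k + 1) * 2^k + gb x y k * (qc z + 1) * 2^k" for x y k z
  proof -
    have "cmp x y k z \<longleftrightarrow> (real (ga x y k) - real (gb x y k)) / real (gc x y k + 1) + 2 / real (2^k)
        < (real (qa z) - real (qb z)) / real (qc z + 1)"
      unfolding cmp_def Geq qeq by (simp add: of_rat_divide of_rat_diff of_rat_add)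
    also have "\<dots> \<longleftrightarrow> real (ga x y k) * real (qc z + 1) * real (2^k) + 2 * real (gc x y k + 1) * real (qc z + 1)
        + real (qb z) * real (gc x y k + 1) * real (2^k)
        < real (qa z) * real (gc x y k + 1) * real (2^k) + real (gb x y k) * real (qc z + 1) * real (2^k)"
      by (rule frac_ineq) auto
    also have "\<dots> \<longleftrightarrow> real (ga x y k * (qc z + 1) * 2^k + 2*(gc x y k + 1)*(qc z+1) + qb z * (gc x y k + 1) * 2^k)
      < real (qa z * (gc x y k + 1) * 2^k + gb x y k * (qc z + 1) * 2^k)"
      by (simp only: of_nat_add of_nat_mult of_nat_numeral)
    finally show ?thesis by (simp only: of_nat_less_iff)
  qed
  have rp_cmp: "rp m (\<lambda>xs. cmp (a xs) (b xs) (c xs) (d xs))"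
    if "rf m a" "rf m b" "rf m c" "rf m d" for m a b c d
    unfolding cmp_nat using that
    by (intro rp_less rf_add rf_mult rf_c3[OF ga] rf_c3[OF gb] rf_c3[OF gc] rf_c1[OF qa] rf_c1[OF qb]
        rf_c1[OF qc] rf_pow2 rf_const) auto

  have up: "dist (\<alpha> x) (\<alpha> y) + 1/2^k < real_of_rat (q z)" if "cmp x y k z" for x y k z
    using Gapp[of x y k] that unfolding cmp_def by (simp add: abs_less_iff)
  have down: "cmp x y k z" if "dist (\<alpha> x) (\<alpha> y) + 3/2^k < real_of_rat (q z)" for x y k z
    using Gapp[of x y k] that unfolding cmp_def by (simp add: abs_less_iff)

  define R1 where "R1 j k \<longleftrightarrow> (\<forall>i\<le>n. 1 \<le> i \<longrightarrow> (\<forall>t\<le>\<eta> (Fl [i, k]). \<exists>u\<le>\<eta> j.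
      cmp (\<sigma> (Fl [i, k]) t) (\<tau>1 (\<sigma> j u)) k (\<tau>2 (\<sigma> j u))))" for j k
  define R2 where "R2 i0 k \<longleftrightarrow> (\<exists>i\<le>n. 1 \<le> i \<and> (\<exists>t\<le>\<eta> (Fl [i, k]).
      cmp (\<sigma> (Fl [i, k]) t) (\<tau>1 i0) k (\<tau>2 i0)))" for i0 k

  have p5: "rp 5 (\<lambda>ws. cmp (\<sigma> (Fl [ws!2, ws!4]) (ws!1)) (\<tau>1 (\<sigma> (ws!3) (ws!0))) (ws!4) (\<tau>2 (\<sigma> (ws!3) (ws!0))))"
    by (intro rp_cmp rf_c2[OF sg] rf_c1[OF t1] rf_c1[OF t2] rf_comp2[OF Fl] rf_proj) auto
  have p4: "rp 4 (\<lambda>zs. \<exists>u\<le>\<eta> (zs!2). cmp (\<sigma> (Fl [zs!1, zs!3]) (zs!0)) (\<tau>1 (\<sigma> (zs!2) u)) (zs!3) (\<tau>2 (\<sigma> (zs!2) u)))"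
    by (rule rp_bexN[OF p5]) (auto intro!: rf_c1[OF e] rf_proj simp: nth_Cons')
  have p3: "rp 3 (\<lambda>ys. 1 \<le> ys!0 \<longrightarrow> (\<forall>t\<le>\<eta> (Fl [ys!0, ys!2]). \<exists>u\<le>\<eta> (ys!1).
      cmp (\<sigma> (Fl [ys!0, ys!2]) t) (\<tau>1 (\<sigma> (ys!1) u)) (ys!2) (\<tau>2 (\<sigma> (ys!1) u))))"
    by (intro rp_imp rp_le rf_const rf_proj rp_ballN[OF p4] rf_c1[OF e] rf_comp2[OF Fl]) (auto simp: nth_Cons')
  have p2: "rp 2 (\<lambda>xs. R1 (xs!0) (xs!1))"
    unfolding R1_def by (rule rp_ballN[OF p3 _ rf_const]) (simp_all add: nth_Cons')

  have q4: "rp 4 (\<lambda>zs. cmp (\<sigma> (Fl [zs!1, zs!3]) (zs!0)) (\<tau>1 (zs!2)) (zs!3) (\<tau>2 (zs!2)))"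
    by (intro rp_cmp rf_c2[OF sg] rf_c1[OF t1] rf_c1[OF t2] rf_comp2[OF Fl] rf_proj) auto
  have q3: "rp 3 (\<lambda>ys. 1 \<le> ys!0 \<and> (\<exists>t\<le>\<eta> (Fl [ys!0, ys!2]). cmp (\<sigma> (Fl [ys!0, ys!2]) t) (\<tau>1 (ys!1)) (ys!2) (\<tau>2 (ys!1))))"
    by (intro rp_and rp_le rf_const rf_proj rp_bexN[OF q4] rf_c1[OF e] rf_comp2[OF Fl]) (auto simp: nth_Cons')
  have q2: "rp 2 (\<lambda>xs. R2 (xs!0) (xs!1))"
    unfolding R2_def by (rule rp_bexN[OF q3 _ rf_const]) (simp_all add: nth_Cons')


  have ptmem: "\<alpha> (\<sigma> m t) \<in> ptset \<alpha> \<sigma> \<eta> m" if "t \<le> \<eta> m" for m t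
    using that unfolding ptset_def seqidx_def by auto
  have ptE: "\<exists>t\<le>\<eta> m. a = \<alpha> (\<sigma> m t)" if "a \<in> ptset \<alpha> \<sigma> \<eta> m" for a m
    using that unfolding ptset_def seqidx_def by auto

  have E1: "{j. S \<subseteq> ratunion \<alpha> q \<tau>1 \<tau>2 \<sigma> \<eta> j} = {j. \<exists>k. R1 j k}"
  proof (intro equalityI subsetI; simp only: mem_Collect_eq)
    fix j assume cov: "S \<subseteq> ratunion \<alpha> q \<tau>1 \<tau>2 \<sigma> \<eta> j"
    have "S \<subseteq> (\<Union>b\<in>seqidx \<sigma> \<eta> j. ball ((\<lambda>b. \<alpha> (\<tau>1 b)) b) ((\<lambda>b. real_of_rat (q (\<tau>2 b))) b))"
      using cov unfolding ratunion_def ratball_def by simp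
    from lebesgue[OF assms(3) this] obtain K where
      K: "\<And>s. s \<in> S \<Longrightarrow> \<exists>b\<in>seqidx \<sigma> \<eta> j. dist s (\<alpha> (\<tau>1 b)) + 4/2^K < real_of_rat (q (\<tau>2 b))"
      by blast
    have "R1 j K" unfolding R1_def
    proof (intro allI impI)
      fix i t assume i: "i \<le> n" "1 \<le> i" and t: "t \<le> \<eta> (Fl [i, K])"
      have iin: "i \<in> {1..n}" using i by auto
      have "\<alpha> (\<sigma> (fs i K) t) \<in> ptset \<alpha> \<sigma> \<eta> (fs i K)" using ptmem t Fleq[OF iin] by simp
      then obtain s where s: "s \<in> S" "dist (\<alpha> (\<sigma> (fs i K) t)) s < 1/2^K"
        using fsS[OF iin, of K] unfolding approx_prec_def by blast
      obtain b where b: "b \<in> seqidx \<sigma> \<eta> j" "dist s (\<alpha> (\<tau>1 b)) + 4/2^K < real_of_rat (q (\<tau>2 b))"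
        using K[OF s(1)] by blast
      obtain u where u: "u \<le> \<eta> j" "b = \<sigma> j u" using b(1) unfolding seqidx_def by auto
      have "dist (\<alpha> (\<sigma> (fs i K) t)) (\<alpha> (\<tau>1 b)) \<le> dist (\<alpha> (\<sigma> (fs i K) t)) s + dist s (\<alpha> (\<tau>1 b))"
        by (rule dist_triangle)
      then have "cmp (\<sigma> (fs i K) t) (\<tau>1 b) K (\<tau>2 b)"
        using s(2) b(2) by (intro down) simp
      then show "\<exists>u\<le>\<eta> j. cmp (\<sigma> (Fl [i, K]) t) (\<tau>1 (\<sigma> j u)) K (\<tau>2 (\<sigma> j u))"
        using u Fleq[OF iin] by auto
    qed
    then show "\<exists>k. R1 j k" by blast
  next
    fix j assume "\<exists>k. R1 j k"
    then obtain k where R: "R1 j k" by blast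
    show "S \<subseteq> ratunion \<alpha> q \<tau>1 \<tau>2 \<sigma> \<eta> j"
    proof
      fix s assume "s \<in> S"
      then obtain i where iin: "i \<in> {1..n}" and si: "s \<in> A i" using assms(5) by auto
      obtain a where a: "a \<in> ptset \<alpha> \<sigma> \<eta> (fs i k)" "dist s a < 1/2^k"
        using fsA[OF iin, of k] si unfolding approx_prec_def by blast
      obtain t where t: "t \<le> \<eta> (fs i k)" "a = \<alpha> (\<sigma> (fs i k) t)" using ptE[OF a(1)] by blast
      obtain u where u: "u \<le> \<eta> j" "cmp (\<sigma> (fs i k) t) (\<tau>1 (\<sigma> j u)) k (\<tau>2 (\<sigma> j u))"
        using R iin t(1) Fleq[OF iin] unfolding R1_def by fastforce
      have d: "dist a (\<alpha> (\<tau>1 (\<sigma> j u))) + 1/2^k < real_of_rat (q (\<tau>2 (\<sigma> j u)))"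
        using up[OF u(2)] t(2) by simp
      have "dist s (\<alpha> (\<tau>1 (\<sigma> j u))) \<le> dist s a + dist a (\<alpha> (\<tau>1 (\<sigma> j u)))" by (rule dist_triangle)
      then have "s \<in> ratball \<alpha> q \<tau>1 \<tau>2 (\<sigma> j u)"
        using a(2) d unfolding ratball_def by (simp add: dist_commute)
      moreover have "\<sigma> j u \<in> seqidx \<sigma> \<eta> j" using u(1) unfolding seqidx_def by auto
      ultimately show "s \<in> ratunion \<alpha> q \<tau>1 \<tau>2 \<sigma> \<eta> j" unfolding ratunion_def by blast
    qed
  qed

  have E2: "{i. S \<inter> ratball \<alpha> q \<tau>1 \<tau>2 i \<noteq> {}} = {i. \<exists>k. R2 i k}"
  proof (intro equalityI subsetI; simp only: mem_Collect_eq)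
    fix i0 assume "S \<inter> ratball \<alpha> q \<tau>1 \<tau>2 i0 \<noteq> {}"
    then obtain s where s: "s \<in> S" "dist s (\<alpha> (\<tau>1 i0)) < real_of_rat (q (\<tau>2 i0))"
      unfolding ratball_def by (auto simp: dist_commute)
    obtain k where k: "4/2^k < real_of_rat (q (\<tau>2 i0)) - dist s (\<alpha> (\<tau>1 i0))"
      using small_pow s(2) by (metis diff_gt_0_iff_gt)
    obtain i where iin: "i \<in> {1..n}" and si: "s \<in> A i" using assms(5) s(1) by auto
    obtain a where a: "a \<in> ptset \<alpha> \<sigma> \<eta> (fs i k)" "dist s a < 1/2^k"
      using fsA[OF iin, of k] si unfolding approx_prec_def by blast
    obtain t where t: "t \<le> \<eta> (fs i k)" "a = \<alpha> (\<sigma> (fs i k) t)" using ptE[OF a(1)] by blast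
    have "dist a (\<alpha> (\<tau>1 i0)) \<le> dist a s + dist s (\<alpha> (\<tau>1 i0))" by (rule dist_triangle)
    then have "cmp (\<sigma> (fs i k) t) (\<tau>1 i0) k (\<tau>2 i0)"
      using a(2) k t(2) by (intro down) (simp add: dist_commute)
    then have "\<exists>t\<le>\<eta> (Fl [i,k]). cmp (\<sigma> (Fl [i,k]) t) (\<tau>1 i0) k (\<tau>2 i0)"
      using t(1) Fleq[OF iin] by (intro exI[of _ t]) auto
    then have "R2 i0 k" unfolding R2_def using iin by (intro exI[of _ i]) auto
    then show "\<exists>k. R2 i0 k" by blast
  next
    fix i0 assume "\<exists>k. R2 i0 k"
    then obtain k i t where iin: "i \<in> {1..n}" and t: "t \<le> \<eta> (fs i k)"
      and c: "cmp (\<sigma> (fs i k) t) (\<tau>1 i0) k (\<tau>2 i0)"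
      unfolding R2_def using Fleq by fastforce
    obtain s where s: "s \<in> S" "dist (\<alpha> (\<sigma> (fs i k) t)) s < 1/2^k"
      using fsS[OF iin, of k] ptmem[OF t] unfolding approx_prec_def by blast
    have "dist s (\<alpha> (\<tau>1 i0)) \<le> dist s (\<alpha> (\<sigma> (fs i k) t)) + dist (\<alpha> (\<sigma> (fs i k) t)) (\<alpha> (\<tau>1 i0))"
      by (rule dist_triangle)
    then have "s \<in> ratball \<alpha> q \<tau>1 \<tau>2 i0"
      using up[OF c] s(2) unfolding ratball_def by (simp add: dist_commute)
    with s(1) show "S \<inter> ratball \<alpha> q \<tau>1 \<tau>2 i0 \<noteq> {}" by blast
  qed

  show ?thesis unfolding computable_compact_set_def E1 E2
    using assms(3) ce_from_test[OF t1 t2 tsurj p2] ce_from_test[OF t1 t2 tsurj q2] by blast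
qed

end
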